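(* Let $\alpha,\beta$ be positive quadratic irrationals and let $A,B\in GL(2,\mathbb Z)$ be non-identity matrices with $\operatorname{Aut}(\mathcal A_\alpha)\cong\mathbb T^2\rtimes_{\psi_A}\mathbb Z$ and $\operatorname{Aut}(\mathcal A_\beta)\cong\mathbb T^2\rtimes_{\psi_B}\mathbb Z$. Then $\operatorname{Aut}(\mathcal A_\alpha)\cong\operatorname{Aut}(\mathcal A_\beta)$ if and only if there exists $C\in GL(2,\mathbb Z)$ with $B=C^{-1}AC$ or $B^{-1}=C^{-1}AC$.
   Context: For a positive irrational $\alpha$, $\mathcal A_\alpha=\{f\in C(\mathbb T^2): \hat f(m,n)=0 \text{ whenever } m+\alpha n<0\}$ (with $\mathbb T$ the unit circle and $\hat f$ the Fourier transform on $\mathbb Z^2$), a uniform algebra with the sup norm, and $\operatorname{Aut}(\mathcal A_\alpha)$ is its group of isometric automorphisms. For $A=\begin{bmatrix} a&b\\ c&d\end{bmatrix}\in GL(2,\mathbb Z)$, $\psi_A:\mathbb T^2\to\mathbb T^2$ is $\psi_A(c_1,c_2)=(c_1^ac_2^b,c_1^cc_2^d)$; the (continuous) automorphisms of the group $\mathbb T^2$ are exactly the $\psi_A$. The semidirect product $\mathbb T^2\rtimes_{\psi_A}\mathbb Z$ has multiplication $(\mathbf c,m)\cdot(\mathbf d,n)=(\mathbf c\,\psi_A^m(\mathbf d),m+n)$. Isomorphisms of these semidirect products are understood with automorphisms of $\mathbb T^2$ taken in the continuous sense (i.e. as topological groups). *)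

theory Defs
  imports "HOL-Analysis.Analysis" "HOL-Algebra.Group"
begin

section \<open>The torus and the algebra A_alpha\<close>

definition torus2 :: "(complex \<times> complex) set" where
  "torus2 = {(z, w). cmod z = 1 \<and> cmod w = 1}"

text \<open>Fourier coefficient of f on T^2 at (m,n), normalised Haar measure.\<close>
definition fourier2 :: "(complex \<times> complex \<Rightarrow> complex) \<Rightarrow> int \<Rightarrow> int \<Rightarrow> complex" where
  "fourier2 f m n = complex_of_real (1 / (4 * pi\<^sup>2)) *
     integral (cbox (0, 0) (2 * pi, 2 * pi))
       (\<lambda>(s, t). f (cis s, cis t) * cis (- (of_int m * s + of_int n * t)))"

text \<open>Elements of C(T^2) are represented as functions that vanish off T^2
  (extensional), so that equality of functions is equality on T^2.\<close>
definition CT2 :: "(complex \<times> complex \<Rightarrow> complex) set" where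
  "CT2 = {f. continuous_on torus2 f \<and> f \<in> extensional torus2}"

definition A_alg :: "real \<Rightarrow> (complex \<times> complex \<Rightarrow> complex) set" where
  "A_alg \<alpha> = {f \<in> CT2. \<forall>m n::int. of_int m + \<alpha> * of_int n < 0 \<longrightarrow> fourier2 f m n = 0}"

definition supnorm :: "(complex \<times> complex \<Rightarrow> complex) \<Rightarrow> real" where
  "supnorm f = (SUP x\<in>torus2. cmod (f x))"

text \<open>Isometric (algebra) automorphisms of A_alpha.\<close>
definition Aut_set :: "real \<Rightarrow> ((complex \<times> complex \<Rightarrow> complex) \<Rightarrow> (complex \<times> complex \<Rightarrow> complex)) set" where
  "Aut_set \<alpha> = {\<Phi>. \<Phi> \<in> extensional (A_alg \<alpha>) \<and> bij_betw \<Phi> (A_alg \<alpha>) (A_alg \<alpha>)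
     \<and> (\<forall>f\<in>A_alg \<alpha>. \<forall>g\<in>A_alg \<alpha>. \<Phi> (\<lambda>x. f x + g x) = (\<lambda>x. \<Phi> f x + \<Phi> g x) \<and> \<Phi> (\<lambda>x. f x * g x) = (\<lambda>x. \<Phi> f x * \<Phi> g x))
     \<and> (\<forall>c::complex. \<forall>f\<in>A_alg \<alpha>. \<Phi> (\<lambda>x. c * f x) = (\<lambda>x. c * \<Phi> f x))
     \<and> (\<forall>f\<in>A_alg \<alpha>. supnorm (\<Phi> f) = supnorm f)}"

definition AutG :: "real \<Rightarrow> ((complex \<times> complex \<Rightarrow> complex) \<Rightarrow> (complex \<times> complex \<Rightarrow> complex)) monoid" where
  "AutG \<alpha> = \<lparr>carrier = Aut_set \<alpha>, monoid.mult = (\<lambda>\<Phi> \<Psi>. compose (A_alg \<alpha>) \<Phi> \<Psi>),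
            one = restrict id (A_alg \<alpha>)\<rparr>"

text \<open>Topology on Aut(A_alpha): point-norm (strong) topology, generated by the sets
  {Phi. ||Phi f - g|| < r}.\<close>
definition AutTop :: "real \<Rightarrow> ((complex \<times> complex \<Rightarrow> complex) \<Rightarrow> (complex \<times> complex \<Rightarrow> complex)) topology" where
  "AutTop \<alpha> = topology_generated_by
     (insert (Aut_set \<alpha>)
       {{\<Phi> \<in> Aut_set \<alpha>. supnorm (\<lambda>x. \<Phi> f x - g x) < r} | f g r. f \<in> A_alg \<alpha> \<and> g \<in> CT2 \<and> r > 0})"

section \<open>GL(2,Z), psi_A and the semidirect product\<close>

definition GL2Z :: "(int^2^2) set" where
  "GL2Z = {A. invertible A}"

definition psi :: "int^2^2 \<Rightarrow> complex \<times> complex \<Rightarrow> complex \<times> complex" where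
  "psi A = (\<lambda>(c1, c2). (c1 powi (A$1$1) * c2 powi (A$1$2), c1 powi (A$2$1) * c2 powi (A$2$2)))"

text \<open>Integer matrix powers (A^m = (A^{-1})^{-m} for m < 0).\<close>
definition mpow :: "int^2^2 \<Rightarrow> int \<Rightarrow> int^2^2" where
  "mpow A m = (if m \<ge> 0 then (((**) A) ^^ nat m) (mat 1)
               else (((**) (matrix_inv A)) ^^ nat (- m)) (mat 1))"

text \<open>psi_A^m = psi_{A^m}.\<close>
definition semidirect :: "int^2^2 \<Rightarrow> ((complex \<times> complex) \<times> int) monoid" where
  "semidirect A = \<lparr>carrier = torus2 \<times> UNIV,
     monoid.mult = (\<lambda>(c, m) (d, n). let d' = psi (mpow A m) d in ((fst c * fst d', snd c * snd d'), m + n)),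
     one = ((1, 1), 0)\<rparr>"

definition semidirectTop :: "((complex \<times> complex) \<times> int) topology" where
  "semidirectTop = prod_topology (subtopology euclidean torus2) (discrete_topology UNIV)"

text \<open>Isomorphism of topological groups.\<close>
definition top_group_iso :: "('a, 'c) monoid_scheme \<Rightarrow> 'a topology \<Rightarrow> ('b, 'd) monoid_scheme \<Rightarrow> 'b topology \<Rightarrow> bool" where
  "top_group_iso G X H Y \<longleftrightarrow> (\<exists>\<phi>. \<phi> \<in> iso G H \<and> homeomorphic_map X Y \<phi>)"

definition quadratic_irrational :: "real \<Rightarrow> bool" where
  "quadratic_irrational x \<longleftrightarrow> x \<notin> \<rat> \<and>
     (\<exists>a b c :: int. a \<noteq> 0 \<and> of_int a * x\<^sup>2 + of_int b * x + of_int c = 0)"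

end

theory Submission
  imports Defs
begin


lemma torus2_iff: "(a,b) \<in> torus2 \<longleftrightarrow> cmod a = 1 \<and> cmod b = 1"
  by (simp add: torus2_def)

lemma minv: "invertible (A::int^2^2) \<Longrightarrow> A ** matrix_inv A = mat 1 \<and> matrix_inv A ** A = mat 1"
  unfolding invertible_def matrix_inv_def by (metis (mono_tags, lifting) someI_ex)

lemma minv_unique: "(A::int^2^2) ** B = mat 1 \<Longrightarrow> B ** A = mat 1 \<Longrightarrow> matrix_inv A = B"
proof -
  assume h: "A ** B = mat 1" "B ** A = mat 1"
  then have inv: "invertible A" unfolding invertible_def by blast
  from minv[OF inv] have "matrix_inv A = matrix_inv A ** (A ** B)" using h by simp
  also have "\<dots> = B" using minv[OF inv] by (simp add: matrix_mul_assoc)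
  finally show ?thesis .
qed

lemma minv_invertible: "invertible (A::int^2^2) \<Longrightarrow> invertible (matrix_inv A)"
  using minv unfolding invertible_def by blast

lemma minv_minv: "invertible (A::int^2^2) \<Longrightarrow> matrix_inv (matrix_inv A) = A"
  using minv minv_unique by blast

lemma powi_comm_pos: "cmod z = 1 \<Longrightarrow> z \<noteq> 0" by auto

lemma psi_torus: "c \<in> torus2 \<Longrightarrow> psi A c \<in> torus2"
  by (cases c) (auto simp: psi_def torus2_def norm_mult norm_power_int)

lemma psi_comp: "c \<in> torus2 \<Longrightarrow> psi A (psi B c) = psi (A ** B) c"
proof (cases c)
  case (Pair c1 c2)
  assume "c \<in> torus2"
  then have nz: "c1 \<noteq> 0" "c2 \<noteq> 0" using Pair by (auto simp: torus2_def)
  show ?thesis using nz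
    by (simp add: Pair psi_def matrix_matrix_mult_def sum_2 power_int_mult_distrib
          power_int_add power_int_mult[symmetric] mult_ac)
qed

lemma psi_id: "psi (mat 1) c = c"
  by (cases c) (simp add: psi_def mat_def)

lemma powi_all_one: assumes "\<forall>z::complex. cmod z = 1 \<longrightarrow> z powi k = 1" shows "k = 0"
proof (rule ccontr)
  assume k: "k \<noteq> 0"
  have "cis (pi / of_int k) powi k = cis pi" using k by (simp add: cis_power_int)
  moreover have "cis (pi / of_int k) powi k = 1" using assms by simp
  ultimately show False by simp
qed

lemma powi_inj: assumes "\<forall>z::complex. cmod z = 1 \<longrightarrow> z powi a = z powi b" shows "a = b"
proof -
  have "\<forall>z::complex. cmod z = 1 \<longrightarrow> z powi (a - b) = 1"
  proof (intro allI impI)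
    fix z :: complex assume z: "cmod z = 1"
    then have "z \<noteq> 0" by auto
    then show "z powi (a - b) = 1" using assms z by (simp add: power_int_diff)
  qed
  then show ?thesis using powi_all_one by fastforce
qed

lemma psi_inj: assumes "\<forall>c\<in>torus2. psi A c = psi B c" shows "A = B"
proof -
  have e1: "\<forall>z::complex. cmod z = 1 \<longrightarrow> z powi (A$i$1) = z powi (B$i$1)" for i
  proof (intro allI impI)
    fix z :: complex assume "cmod z = 1"
    then have "psi A (z,1) = psi B (z,1)" using assms by (auto simp: torus2_def)
    then show "z powi (A$i$1) = z powi (B$i$1)" using exhaust_2[of i] by (auto simp: psi_def)
  qed
  have e2: "\<forall>z::complex. cmod z = 1 \<longrightarrow> z powi (A$i$2) = z powi (B$i$2)" for i
  proof (intro allI impI)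
    fix z :: complex assume "cmod z = 1"
    then have "psi A (1,z) = psi B (1,z)" using assms by (auto simp: torus2_def)
    then show "z powi (A$i$2) = z powi (B$i$2)" using exhaust_2[of i] by (auto simp: psi_def)
  qed
  show ?thesis
    unfolding vec_eq_iff forall_2 using powi_inj e1 e2 by blast
qed

lemma mpow_0: "mpow A 0 = mat 1" by (simp add: mpow_def)
lemma mpow_1: "mpow A 1 = A" by (simp add: mpow_def)
lemma mpow_m1: "mpow A (-1) = matrix_inv A" by (simp add: mpow_def)

lemma pow_conj: assumes "invertible (C::int^2^2)"
  shows "(((**) (matrix_inv C ** A ** C)) ^^ n) (mat 1) = matrix_inv C ** (((**) A) ^^ n) (mat 1) ** C"
proof (induction n)
  case 0 then show ?case using minv[OF assms] by simp
next
  case (Suc n)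
  have "(((**) (matrix_inv C ** A ** C)) ^^ Suc n) (mat 1) =
        (matrix_inv C ** A ** C) ** (matrix_inv C ** (((**) A) ^^ n) (mat 1) ** C)"
    using Suc by simp
  also have "\<dots> = matrix_inv C ** A ** (C ** matrix_inv C) ** (((**) A) ^^ n) (mat 1) ** C"
    by (simp add: matrix_mul_assoc)
  also have "\<dots> = matrix_inv C ** (((**) A) ^^ Suc n) (mat 1) ** C"
    using minv[OF assms] by (simp add: matrix_mul_assoc)
  finally show ?case .
qed

lemma minv_conj: assumes C: "invertible (C::int^2^2)" and A: "invertible A"
  shows "matrix_inv (matrix_inv C ** A ** C) = matrix_inv C ** matrix_inv A ** C"
proof (rule minv_unique)
  have c: "C ** matrix_inv C = mat 1" "matrix_inv C ** C = mat 1" using minv[OF C] by auto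
  have a: "A ** matrix_inv A = mat 1" "matrix_inv A ** A = mat 1" using minv[OF A] by auto
  have "matrix_inv C ** A ** C ** (matrix_inv C ** matrix_inv A ** C)
      = matrix_inv C ** A ** (C ** matrix_inv C) ** matrix_inv A ** C" by (simp add: matrix_mul_assoc)
  also have "\<dots> = matrix_inv C ** (A ** matrix_inv A) ** C" using c by (simp add: matrix_mul_assoc)
  also have "\<dots> = mat 1" using a c by simp
  finally show "matrix_inv C ** A ** C ** (matrix_inv C ** matrix_inv A ** C) = mat 1" .
  have "matrix_inv C ** matrix_inv A ** C ** (matrix_inv C ** A ** C)
      = matrix_inv C ** matrix_inv A ** (C ** matrix_inv C) ** A ** C" by (simp add: matrix_mul_assoc)
  also have "\<dots> = matrix_inv C ** (matrix_inv A ** A) ** C" using c by (simp add: matrix_mul_assoc)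
  also have "\<dots> = mat 1" using a c by simp
  finally show "matrix_inv C ** matrix_inv A ** C ** (matrix_inv C ** A ** C) = mat 1" .
qed

lemma mpow_conj: assumes C: "invertible (C::int^2^2)" and A: "invertible A"
  shows "mpow (matrix_inv C ** A ** C) m = matrix_inv C ** mpow A m ** C"
  using pow_conj[OF C, where A=A] pow_conj[OF C, where A="matrix_inv A"] minv_conj[OF C A]
  by (simp add: mpow_def)

lemma mpow_inv: assumes "invertible (B::int^2^2)"
  shows "mpow (matrix_inv B) m = mpow B (-m)"
  using minv_minv[OF assms] by (simp add: mpow_def)



lemma additive_int_mult:
  fixes G :: "real \<Rightarrow> complex"
  assumes add: "\<And>s t. G (s + t) = G s + G t"
  shows "G (of_int k * x) = of_int k * G x"
proof -
  have G0: "G 0 = 0" using add[of 0 0] by simp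
  have nat: "G (of_nat n * x) = of_nat n * G x" for n
    by (induction n) (simp_all add: G0 add distrib_right add.commute)
  have neg: "G (- y) = - G y" for y using add[of y "-y"] G0 by (simp add: eq_neg_iff_add_eq_0 add.commute)
  show ?thesis
  proof (cases "k \<ge> 0")
    case True then show ?thesis using nat[of "nat k"] by simp
  next
    case False
    then have "of_int k * x = - (of_nat (nat (-k)) * x)" by simp
    then show ?thesis using nat[of "nat (-k)"] neg False by simp
  qed
qed

lemma additive_linear:
  fixes G :: "real \<Rightarrow> complex"
  assumes add: "\<And>s t. G (s + t) = G s + G t" and cont: "continuous_on UNIV G"
  shows "G t = of_real t * G 1"
proof -
  have rat: "G q = of_real q * G 1" if "q \<in> \<rat>" for q
  proof -
    obtain a b where ab: "q = of_int a / of_int b" "b > 0"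
      using \<open>q \<in> \<rat>\<close> by (metis Rats_cases')
    have "of_int b * G (1 / of_int b) = G (of_int b * (1 / of_int b))"
      by (rule additive_int_mult[OF add, where k=b and x="1 / of_int b", symmetric])
    also have "\<dots> = G 1" using ab by simp
    finally have h: "G (1 / of_int b) = G 1 / of_int b" using ab
      by (simp add: field_simps)
    have "G q = G (of_int a * (1 / of_int b))" using ab by simp
    also have "\<dots> = of_int a * G (1 / of_int b)" by (rule additive_int_mult[OF add, where k=a and x="1 / of_int b"])
    also have "\<dots> = of_int a * (G 1 / of_int b)" using h by simp
    also have "\<dots> = of_real q * G 1"
    proof -
      have "complex_of_real q = of_int a / of_int b" using ab by (simp add: of_real_divide)
      then show ?thesis by (simp only: times_divide_eq_left times_divide_eq_right mult.commute)
    qed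
    finally show ?thesis .
  qed
  have cl: "continuous_on UNIV (\<lambda>x. complex_of_real x * G 1)" by (intro continuous_intros)
  have "closed {x. G x = (\<lambda>x. of_real x * G 1) x}"
    by (rule closed_Collect_eq[OF cont cl])
  moreover have "\<rat> \<subseteq> {x. G x = of_real x * G 1}" using rat by (simp only: subset_iff mem_Collect_eq) blast
  ultimately have "closure \<rat> \<subseteq> {x. G x = of_real x * G 1}" by (simp add: closure_minimal)
  then have "t \<in> {x. G x = of_real x * G 1}" using Rats_closure_real by blast
  then show ?thesis by (simp only: mem_Collect_eq)
qed

lemma circle_char:
  fixes ch :: "complex \<Rightarrow> complex"
  assumes cont: "continuous_on {z. cmod z = 1} ch"
    and circ: "\<And>z. cmod z = 1 \<Longrightarrow> cmod (ch z) = 1"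
    and hom: "\<And>z w. cmod z = 1 \<Longrightarrow> cmod w = 1 \<Longrightarrow> ch (z * w) = ch z * ch w"
  shows "\<exists>n::int. \<forall>z. cmod z = 1 \<longrightarrow> ch z = z powi n"
proof -
  define f where "f t = ch (cis t)" for t
  have contf: "continuous_on UNIV f" unfolding f_def
    by (rule continuous_on_compose2[OF cont]) (intro continuous_intros, auto)
  have fnz: "f t \<noteq> 0" for t using circ[of "cis t"] by (auto simp: f_def)
  have fnz': "\<And>z. z \<in> UNIV \<Longrightarrow> f z \<noteq> 0" using fnz by simp
  obtain g where contg: "continuous_on UNIV g" and fg0: "\<And>t. t \<in> UNIV \<Longrightarrow> f t = exp (g t)"
    using continuous_logarithm_on_contractible[OF contf contractible_UNIV fnz'] by blast
  have fg: "f t = exp (g t)" for t using fg0 by simp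
  have fmul: "f (s + t) = f s * f t" for s t
    unfolding f_def using hom[of "cis s" "cis t"] by (simp add: cis_mult)
  define h where "h p = (g (fst p + snd p) - g (fst p) - g (snd p)) / (2 * pi * \<i>)" for p
  have hint: "\<exists>k::int. h p = of_int k" for p
  proof -
    have "exp (g (fst p + snd p)) = exp (g (fst p) + g (snd p))"
      using fmul[of "fst p" "snd p"] fg by (simp add: exp_add)
    then obtain n :: int where n: "g (fst p + snd p) = g (fst p) + g (snd p) + (of_int (2 * n) * pi) * \<i>"
      using exp_eq by blast
    have "h p = of_int n" unfolding h_def n by (simp add: field_simps)
    then show ?thesis by blast
  qed
  have c1: "continuous_on UNIV (\<lambda>p::real\<times>real. g (fst p + snd p))"
    by (rule continuous_on_compose2[OF contg]) (intro continuous_intros, simp)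
  have c2: "continuous_on UNIV (\<lambda>p::real\<times>real. g (fst p))"
    by (rule continuous_on_compose2[OF contg]) (intro continuous_intros, simp)
  have c3: "continuous_on UNIV (\<lambda>p::real\<times>real. g (snd p))"
    by (rule continuous_on_compose2[OF contg]) (intro continuous_intros, simp)
  have conth: "continuous_on UNIV h" unfolding h_def
    by (intro continuous_intros c1 c2 c3) auto
  have "h constant_on UNIV"
  proof (rule continuous_discrete_range_constant[OF _ conth])
    show "connected (UNIV :: (real \<times> real) set)" by (rule connected_UNIV)
    fix x :: "real \<times> real" assume "x \<in> UNIV"
    show "\<exists>e>0. \<forall>y. y \<in> UNIV \<and> h y \<noteq> h x \<longrightarrow> e \<le> norm (h y - h x)"
    proof (intro exI[of _ 1] conjI allI impI)
      fix y assume "y \<in> UNIV \<and> h y \<noteq> h x"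
      then obtain a b :: int where "h y = of_int a" "h x = of_int b" "a \<noteq> b" using hint by metis
      then have "norm (h y - h x) = \<bar>of_int (a - b)\<bar>"
        by (metis norm_of_int of_int_diff)
      then show "1 \<le> norm (h y - h x)" using \<open>a \<noteq> b\<close> by linarith
    qed simp
  qed
  then obtain y where hy: "\<And>x. h x = y" unfolding constant_on_def by blast
  have hc: "h p = h (0, 0)" for p using hy by simp
  define G where "G t = g t - g 0" for t
  have Gadd: "G (s + t) = G s + G t" for s t
  proof -
    have "h (s, t) = h (0, 0)" by (rule hc)
    then have "(g (s + t) - g s - g t) / (2 * pi * \<i>) = (g 0 - g 0 - g 0) / (2 * pi * \<i>)" unfolding h_def by simp
    then have "g (s + t) - g s - g t = g 0 - g 0 - g 0" by (simp only: divide_cancel_right) simp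
    moreover have "(g (s+t) - g 0) - ((g s - g 0) + (g t - g 0)) = (g (s + t) - g s - g t) - (g 0 - g 0 - g 0)"
      by (simp add: algebra_simps)
    ultimately have "(g (s+t) - g 0) - ((g s - g 0) + (g t - g 0)) = 0" by (simp only: diff_self)
    then show ?thesis unfolding G_def by (simp only: right_minus_eq)
  qed
  have contG: "continuous_on UNIV G" unfolding G_def by (intro continuous_intros contg)
  have chi1: "ch 1 = 1"
  proof -
    have e: "ch (1*1) = ch 1 * ch 1" by (rule hom) simp_all
    have "ch 1 * ch 1 = ch 1 * 1" using e unfolding mult_1_right by (rule sym)
    moreover have "ch 1 \<noteq> 0" using circ[of 1] by auto
    ultimately show ?thesis by (metis mult_left_cancel)
  qed
  have f0: "exp (g 0) = 1" using fg[of 0] chi1 by (simp add: f_def)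
  have fG: "f t = exp (G t)" for t
    using fg[of t] f0 unfolding G_def by (simp add: exp_diff)
  have Glin: "G t = of_real t * G 1" for t by (rule additive_linear[OF Gadd contG])
  have "exp (G (2 * pi)) = 1" using fG[of "2*pi"] chi1 by (simp add: f_def)
  then obtain n :: int where n: "G (2*pi) = 0 + (of_int (2 * n) * pi) * \<i>"
    using exp_eq[of "G (2*pi)" 0] by auto
  have G1: "G 1 = \<i> * of_int n"
  proof -
    have "of_real (2*pi) * G 1 = G (2*pi)" by (rule Glin[symmetric])
    also have "\<dots> = of_real (2*pi) * (\<i> * of_int n)" unfolding n by simp
    finally have "of_real (2*pi) * G 1 = of_real (2*pi) * (\<i> * of_int n)" .
    then show ?thesis by simp
  qed
  have "ch z = z powi n" if z: "cmod z = 1" for z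
  proof -
    have zc: "z = cis (Arg z)" using rcis_cmod_Arg[of z] z by (simp add: rcis_def)
    have "ch z = f (Arg z)" unfolding f_def by (rule arg_cong[where f=ch, OF zc])
    also have "\<dots> = exp (\<i> * of_real (of_int n * Arg z))" using fG[of "Arg z"] Glin[of "Arg z"] G1 by (simp add: mult_ac)
    also have "\<dots> = cis (of_int n * Arg z)" by (simp add: cis_conv_exp)
    also have "\<dots> = cis (Arg z) powi n" by (simp add: cis_power_int)
    also have "\<dots> = z powi n" by (simp only: zc[symmetric])
    finally show ?thesis .
  qed
  then show ?thesis by blast
qed



definition tmul :: "complex \<times> complex \<Rightarrow> complex \<times> complex \<Rightarrow> complex \<times> complex" where
  "tmul c d = (fst c * fst d, snd c * snd d)"

lemma coord_char:
  assumes cont: "continuous_on torus2 \<theta>" and into: "\<And>c. c \<in> torus2 \<Longrightarrow> \<theta> c \<in> torus2"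
    and hom: "\<And>c d. c \<in> torus2 \<Longrightarrow> d \<in> torus2 \<Longrightarrow> \<theta> (tmul c d) = tmul (\<theta> c) (\<theta> d)"
    and emb: "\<And>z. cmod z = 1 \<Longrightarrow> e z \<in> torus2"
    and econt: "continuous_on {z. cmod z = 1} e"
    and emul: "\<And>z w. cmod z = 1 \<Longrightarrow> cmod w = 1 \<Longrightarrow> e (z * w) = tmul (e z) (e w)"
    and p: "p = fst \<or> p = snd"
  shows "\<exists>n::int. \<forall>z. cmod z = 1 \<longrightarrow> p (\<theta> (e z)) = z powi n"
proof (rule circle_char)
  have pc: "continuous_on UNIV p" using p by (auto intro: continuous_on_fst continuous_on_snd continuous_on_id)
  have "continuous_on {z. cmod z = 1} (\<lambda>z. \<theta> (e z))"
    by (rule continuous_on_compose2[OF cont econt]) (use emb in auto)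
  then show "continuous_on {z. cmod z = 1} (\<lambda>z. p (\<theta> (e z)))"
    by (rule continuous_on_compose2[OF pc]) simp
  show "cmod (p (\<theta> (e z))) = 1" if "cmod z = 1" for z
    using into[OF emb[OF that]] p by (cases "\<theta> (e z)") (auto simp: torus2_def)
  show "p (\<theta> (e (z * w))) = p (\<theta> (e z)) * p (\<theta> (e w))" if "cmod z = 1" "cmod w = 1" for z w
    by (simp only: emul[OF that] hom[OF emb[OF that(1)] emb[OF that(2)]]) (use p in \<open>auto simp: tmul_def\<close>)
qed

lemma endo_psi:
  assumes cont: "continuous_on torus2 \<theta>" and into: "\<And>c. c \<in> torus2 \<Longrightarrow> \<theta> c \<in> torus2"
    and hom: "\<And>c d. c \<in> torus2 \<Longrightarrow> d \<in> torus2 \<Longrightarrow> \<theta> (tmul c d) = tmul (\<theta> c) (\<theta> d)"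
  shows "\<exists>C. \<forall>c\<in>torus2. \<theta> c = psi C c"
proof -
  have "\<exists>n. \<forall>z. cmod z = 1 \<longrightarrow> fst (\<theta> (z, 1)) = z powi n"
    by (rule coord_char[where e="\<lambda>z. (z,1)" and p=fst, OF cont into hom]) (auto simp: torus2_def tmul_def intro!: continuous_intros)
  then obtain n11 where n11: "\<forall>z. cmod z = 1 \<longrightarrow> fst (\<theta> (z, 1)) = z powi n11" by blast
  have "\<exists>n. \<forall>z. cmod z = 1 \<longrightarrow> snd (\<theta> (z, 1)) = z powi n"
    by (rule coord_char[where e="\<lambda>z. (z,1)" and p=snd, OF cont into hom]) (auto simp: torus2_def tmul_def intro!: continuous_intros)
  then obtain n21 where n21: "\<forall>z. cmod z = 1 \<longrightarrow> snd (\<theta> (z, 1)) = z powi n21" by blast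
  have "\<exists>n. \<forall>z. cmod z = 1 \<longrightarrow> fst (\<theta> (1, z)) = z powi n"
    by (rule coord_char[where e="\<lambda>z. (1,z)" and p=fst, OF cont into hom]) (auto simp: torus2_def tmul_def intro!: continuous_intros)
  then obtain n12 where n12: "\<forall>z. cmod z = 1 \<longrightarrow> fst (\<theta> (1, z)) = z powi n12" by blast
  have "\<exists>n. \<forall>z. cmod z = 1 \<longrightarrow> snd (\<theta> (1, z)) = z powi n"
    by (rule coord_char[where e="\<lambda>z. (1,z)" and p=snd, OF cont into hom]) (auto simp: torus2_def tmul_def intro!: continuous_intros)
  then obtain n22 where n22: "\<forall>z. cmod z = 1 \<longrightarrow> snd (\<theta> (1, z)) = z powi n22" by blast
  define C :: "int^2^2" where "C = (\<chi> i j. if i = 1 then (if j = 1 then n11 else n12) else (if j = 1 then n21 else n22))"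
  have C: "C$1$1 = n11" "C$1$2 = n12" "C$2$1 = n21" "C$2$2 = n22" by (simp_all add: C_def)
  have "\<theta> c = psi C c" if c: "c \<in> torus2" for c
  proof (cases c)
    case (Pair z w)
    then have zw: "cmod z = 1" "cmod w = 1" using c by (auto simp: torus2_def)
    have "c = tmul (z, 1) (1, w)" using Pair by (simp add: tmul_def)
    then have "\<theta> c = tmul (\<theta> (z, 1)) (\<theta> (1, w))"
      using hom[of "(z,1)" "(1,w)"] zw by (simp add: torus2_def)
    also have "\<dots> = psi C c" using n11 n12 n21 n22 zw Pair
      by (simp add: tmul_def psi_def C)
    finally show ?thesis .
  qed
  then show ?thesis by blast
qed



lemma tgi_trans:
  assumes "top_group_iso G X H Y" "top_group_iso H Y K Z"
  shows "top_group_iso G X K Z"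
proof -
  obtain f where f: "f \<in> iso G H" "homeomorphic_map X Y f" using assms(1) by (auto simp: top_group_iso_def)
  obtain g where g: "g \<in> iso H K" "homeomorphic_map Y Z g" using assms(2) by (auto simp: top_group_iso_def)
  have "g \<circ> f \<in> iso G K"
    using f(1) g(1) unfolding iso_def hom_def
    by (auto simp: Pi_iff intro: bij_betw_trans)
  moreover have "homeomorphic_map X Z (g \<circ> f)" by (rule homeomorphic_map_compose[OF f(2) g(2)])
  ultimately show ?thesis unfolding top_group_iso_def by blast
qed

lemma iso_inv_maps:
  assumes f: "f \<in> iso G H" and hm: "homeomorphic_maps X Y f g"
    and tX: "topspace X = carrier G" and tY: "topspace Y = carrier H"
    and cl: "\<And>x y. x \<in> carrier G \<Longrightarrow> y \<in> carrier G \<Longrightarrow> x \<otimes>\<^bsub>G\<^esub> y \<in> carrier G"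
  shows "g \<in> iso H G"
proof -
  have gf: "\<And>x. x \<in> carrier G \<Longrightarrow> g (f x) = x" and fg: "\<And>y. y \<in> carrier H \<Longrightarrow> f (g y) = y"
    using hm tX tY unfolding homeomorphic_maps_def by auto
  have gin: "\<And>y. y \<in> carrier H \<Longrightarrow> g y \<in> carrier G"
    using hm tX tY unfolding homeomorphic_maps_def continuous_map_def by auto
  have fin: "\<And>x. x \<in> carrier G \<Longrightarrow> f x \<in> carrier H"
    using f unfolding iso_def hom_def by auto
  have fh: "\<And>x y. x \<in> carrier G \<Longrightarrow> y \<in> carrier G \<Longrightarrow> f (x \<otimes>\<^bsub>G\<^esub> y) = f x \<otimes>\<^bsub>H\<^esub> f y"
    using f unfolding iso_def hom_def by auto
  have hom: "g \<in> hom H G"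
    unfolding hom_def
  proof (intro CollectI conjI ballI)
    show "g \<in> carrier H \<rightarrow> carrier G" using gin by auto
    fix a b assume a: "a \<in> carrier H" and b: "b \<in> carrier H"
    have "f (g a \<otimes>\<^bsub>G\<^esub> g b) = a \<otimes>\<^bsub>H\<^esub> b" using fh[OF gin[OF a] gin[OF b]] fg a b by simp
    then have "g (a \<otimes>\<^bsub>H\<^esub> b) = g (f (g a \<otimes>\<^bsub>G\<^esub> g b))" by simp
    also have "\<dots> = g a \<otimes>\<^bsub>G\<^esub> g b" by (rule gf[OF cl[OF gin[OF a] gin[OF b]]])
    finally show "g (a \<otimes>\<^bsub>H\<^esub> b) = g a \<otimes>\<^bsub>G\<^esub> g b" .
  qed
  have "bij_betw g (carrier H) (carrier G)"
    by (rule bij_betw_byWitness[where f'=f]) (use gf fg gin fin in auto)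
  then show ?thesis using hom unfolding iso_def by blast
qed

lemma tgi_sym:
  assumes "top_group_iso G X H Y"
    and tX: "topspace X = carrier G" and tY: "topspace Y = carrier H"
    and cl: "\<And>x y. x \<in> carrier G \<Longrightarrow> y \<in> carrier G \<Longrightarrow> x \<otimes>\<^bsub>G\<^esub> y \<in> carrier G"
  shows "top_group_iso H Y G X"
proof -
  obtain f where f: "f \<in> iso G H" "homeomorphic_map X Y f" using assms(1) by (auto simp: top_group_iso_def)
  then obtain g where g: "homeomorphic_maps X Y f g" by (auto simp: homeomorphic_map_maps)
  have "g \<in> iso H G" by (rule iso_inv_maps[OF f(1) g tX tY cl])
  moreover have "homeomorphic_map Y X g" using g homeomorphic_maps_map homeomorphic_maps_sym by blast
  ultimately show ?thesis unfolding top_group_iso_def by blast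
qed

lemma topspace_AutTop: "topspace (AutTop a) = carrier (AutG a)"
  unfolding AutTop_def AutG_def by auto

lemma carrier_AutG: "carrier (AutG a) = Aut_set a" by (simp add: AutG_def)
lemma mult_AutG: "x \<otimes>\<^bsub>AutG a\<^esub> y = compose (A_alg a) x y" by (simp add: AutG_def)

lemma Aut_closed:
  assumes P: "\<Phi> \<in> Aut_set a" and Q: "\<Psi> \<in> Aut_set a"
  shows "compose (A_alg a) \<Phi> \<Psi> \<in> Aut_set a"
proof -
  let ?A = "A_alg a"
  let ?U = "undefined :: complex \<times> complex \<Rightarrow> complex"
  have Pe: "\<Phi> \<in> extensional ?A" and Pb: "bij_betw \<Phi> ?A ?A"
    and Padd: "\<And>f g. f \<in> ?A \<Longrightarrow> g \<in> ?A \<Longrightarrow> \<Phi> (\<lambda>x. f x + g x) = (\<lambda>x. \<Phi> f x + \<Phi> g x)"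
    and Pmul: "\<And>f g. f \<in> ?A \<Longrightarrow> g \<in> ?A \<Longrightarrow> \<Phi> (\<lambda>x. f x * g x) = (\<lambda>x. \<Phi> f x * \<Phi> g x)"
    and Psc: "\<And>c f. f \<in> ?A \<Longrightarrow> \<Phi> (\<lambda>x. c * f x) = (\<lambda>x. c * \<Phi> f x)"
    and Pn: "\<And>f. f \<in> ?A \<Longrightarrow> supnorm (\<Phi> f) = supnorm f"
    using P unfolding Aut_set_def by auto
  have Qe: "\<Psi> \<in> extensional ?A" and Qb: "bij_betw \<Psi> ?A ?A"
    and Qadd: "\<And>f g. f \<in> ?A \<Longrightarrow> g \<in> ?A \<Longrightarrow> \<Psi> (\<lambda>x. f x + g x) = (\<lambda>x. \<Psi> f x + \<Psi> g x)"
    and Qmul: "\<And>f g. f \<in> ?A \<Longrightarrow> g \<in> ?A \<Longrightarrow> \<Psi> (\<lambda>x. f x * g x) = (\<lambda>x. \<Psi> f x * \<Psi> g x)"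
    and Qsc: "\<And>c f. f \<in> ?A \<Longrightarrow> \<Psi> (\<lambda>x. c * f x) = (\<lambda>x. c * \<Psi> f x)"
    and Qn: "\<And>f. f \<in> ?A \<Longrightarrow> supnorm (\<Psi> f) = supnorm f"
    using Q unfolding Aut_set_def by auto
  have Qin: "\<And>f. f \<in> ?A \<Longrightarrow> \<Psi> f \<in> ?A" using Qb by (auto simp: bij_betw_def)
  have Qsurj: "\<And>f. f \<in> ?A \<Longrightarrow> \<exists>f'\<in>?A. f = \<Psi> f'" using Qb by (auto simp: bij_betw_def)
  have Qout: "\<And>h. h \<notin> ?A \<Longrightarrow> \<Psi> h = ?U" using Qe by (auto simp: extensional_def)
  have Pout: "\<And>h. h \<notin> ?A \<Longrightarrow> \<Phi> h = ?U" using Pe by (auto simp: extensional_def)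
  \<comment> \<open>key: if U is in A, A is closed under the operations\<close>
  have addcl: "(\<lambda>x. f x + g x) \<in> ?A" if UA: "?U \<in> ?A" and f: "f \<in> ?A" and g: "g \<in> ?A" for f g
  proof -
    obtain f' g' where f': "f' \<in> ?A" "f = \<Psi> f'" and g': "g' \<in> ?A" "g = \<Psi> g'"
      using Qsurj f g by blast
    have e: "(\<lambda>x. f x + g x) = \<Psi> (\<lambda>x. f' x + g' x)" using Qadd[OF f'(1) g'(1)] f'(2) g'(2) by simp
    show ?thesis
    proof (cases "(\<lambda>x. f' x + g' x) \<in> ?A")
      case True then show ?thesis using e Qin by simp
    next
      case False then show ?thesis using e Qout UA by simp
    qed
  qed
  have mulcl: "(\<lambda>x. f x * g x) \<in> ?A" if UA: "?U \<in> ?A" and f: "f \<in> ?A" and g: "g \<in> ?A" for f g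
  proof -
    obtain f' g' where f': "f' \<in> ?A" "f = \<Psi> f'" and g': "g' \<in> ?A" "g = \<Psi> g'"
      using Qsurj f g by blast
    have e: "(\<lambda>x. f x * g x) = \<Psi> (\<lambda>x. f' x * g' x)" using Qmul[OF f'(1) g'(1)] f'(2) g'(2) by simp
    show ?thesis
    proof (cases "(\<lambda>x. f' x * g' x) \<in> ?A")
      case True then show ?thesis using e Qin by simp
    next
      case False then show ?thesis using e Qout UA by simp
    qed
  qed
  have sccl: "(\<lambda>x. c * f x) \<in> ?A" if UA: "?U \<in> ?A" and f: "f \<in> ?A" for c f
  proof -
    obtain f' where f': "f' \<in> ?A" "f = \<Psi> f'" using Qsurj f by blast
    have e: "(\<lambda>x. c * f x) = \<Psi> (\<lambda>x. c * f' x)" using Qsc[OF f'(1)] f'(2) by simp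
    show ?thesis
    proof (cases "(\<lambda>x. c * f' x) \<in> ?A")
      case True then show ?thesis using e Qin by simp
    next
      case False then show ?thesis using e Qout UA by simp
    qed
  qed
  let ?C = "compose ?A \<Phi> \<Psi>"
  have Ceq: "\<And>f. f \<in> ?A \<Longrightarrow> ?C f = \<Phi> (\<Psi> f)" by (simp add: compose_eq)
  have Cout: "\<And>f. f \<notin> ?A \<Longrightarrow> ?C f = ?U" by (simp add: compose_def)
  have "?C \<in> extensional ?A" by simp
  moreover have "bij_betw ?C ?A ?A"
  proof -
    have "bij_betw (\<Phi> \<circ> \<Psi>) ?A ?A" by (rule bij_betw_trans[OF Qb Pb])
    then show ?thesis by (rule bij_betw_cong[THEN iffD1, rotated]) (simp add: compose_eq)
  qed
  moreover have "\<forall>f\<in>?A. \<forall>g\<in>?A. ?C (\<lambda>x. f x + g x) = (\<lambda>x. ?C f x + ?C g x) \<and> ?C (\<lambda>x. f x * g x) = (\<lambda>x. ?C f x * ?C g x)"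
  proof (intro ballI conjI)
    fix f g assume f: "f \<in> ?A" and g: "g \<in> ?A"
    show "?C (\<lambda>x. f x + g x) = (\<lambda>x. ?C f x + ?C g x)"
    proof (cases "(\<lambda>x. f x + g x) \<in> ?A")
      case True
      then show ?thesis using Ceq f g Qadd[OF f g] Padd[OF Qin[OF f] Qin[OF g]] by simp
    next
      case False
      then have UA: "?U \<notin> ?A" using addcl f g by blast
      have "(\<lambda>x. \<Psi> f x + \<Psi> g x) = ?U" using Qadd[OF f g] Qout[OF False] by simp
      then have "(\<lambda>x. \<Phi> (\<Psi> f) x + \<Phi> (\<Psi> g) x) = ?U"
        using Padd[OF Qin[OF f] Qin[OF g], symmetric] Pout[OF UA] by metis
      then show ?thesis using Cout[OF False] Ceq f g by simp
    qed
    show "?C (\<lambda>x. f x * g x) = (\<lambda>x. ?C f x * ?C g x)"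
    proof (cases "(\<lambda>x. f x * g x) \<in> ?A")
      case True
      then show ?thesis using Ceq f g Qmul[OF f g] Pmul[OF Qin[OF f] Qin[OF g]] by simp
    next
      case False
      then have UA: "?U \<notin> ?A" using mulcl f g by blast
      have "(\<lambda>x. \<Psi> f x * \<Psi> g x) = ?U" using Qmul[OF f g] Qout[OF False] by simp
      then have "(\<lambda>x. \<Phi> (\<Psi> f) x * \<Phi> (\<Psi> g) x) = ?U"
        using Pmul[OF Qin[OF f] Qin[OF g], symmetric] Pout[OF UA] by metis
      then show ?thesis using Cout[OF False] Ceq f g by simp
    qed
  qed
  moreover have "\<forall>c. \<forall>f\<in>?A. ?C (\<lambda>x. c * f x) = (\<lambda>x. c * ?C f x)"
  proof (intro allI ballI)
    fix c f assume f: "f \<in> ?A"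
    show "?C (\<lambda>x. c * f x) = (\<lambda>x. c * ?C f x)"
    proof (cases "(\<lambda>x. c * f x) \<in> ?A")
      case True
      then show ?thesis using Ceq f Qsc[OF f] Psc[OF Qin[OF f]] by simp
    next
      case False
      then have UA: "?U \<notin> ?A" using sccl f by blast
      have "(\<lambda>x. c * \<Psi> f x) = ?U" using Qsc[OF f] Qout[OF False] by simp
      then have "(\<lambda>x. c * \<Phi> (\<Psi> f) x) = ?U"
        using Psc[OF Qin[OF f], of c, symmetric] Pout[OF UA] by metis
      then show ?thesis using Cout[OF False] Ceq f by simp
    qed
  qed
  moreover have "\<forall>f\<in>?A. supnorm (?C f) = supnorm f"
    using Ceq Pn Qn Qin by simp
  ultimately show ?thesis unfolding Aut_set_def by blast
qed

lemma AutG_closed: "x \<in> carrier (AutG a) \<Longrightarrow> y \<in> carrier (AutG a) \<Longrightarrow> x \<otimes>\<^bsub>AutG a\<^esub> y \<in> carrier (AutG a)"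
  using Aut_closed by (simp add: carrier_AutG mult_AutG)



lemma sd_carrier: "carrier (semidirect A) = torus2 \<times> UNIV" by (simp add: semidirect_def)
lemma sd_mult: "(c, m) \<otimes>\<^bsub>semidirect A\<^esub> (d, n) = (tmul c (psi (mpow A m) d), m + n)"
  by (simp add: semidirect_def tmul_def Let_def)
lemma sd_snd: "snd (x \<otimes>\<^bsub>semidirect A\<^esub> y) = snd x + snd y"
  by (cases x, cases y) (simp add: sd_mult)
lemma sd_top: "topspace semidirectTop = torus2 \<times> UNIV"
  by (simp add: semidirectTop_def)

lemma tmul_torus: "c \<in> torus2 \<Longrightarrow> d \<in> torus2 \<Longrightarrow> tmul c d \<in> torus2"
  by (cases c, cases d) (simp add: tmul_def torus2_def norm_mult)
lemma tmul_1_left[simp]: "tmul (1,1) x = x" by (simp add: tmul_def)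
lemma tmul_1_right[simp]: "tmul x (1,1) = x" by (simp add: tmul_def)
lemma psi_one[simp]: "psi X (1,1) = (1,1)" by (simp add: psi_def)
lemma one_torus[simp]: "(1,1) \<in> torus2" by (simp add: torus2_def)
lemma psi_tmul: "psi D (tmul x y) = tmul (psi D x) (psi D y)"
  by (cases x, cases y) (simp add: psi_def tmul_def power_int_mult_distrib mult_ac)

lemma sd_closed: "x \<in> carrier (semidirect A) \<Longrightarrow> y \<in> carrier (semidirect A) \<Longrightarrow> x \<otimes>\<^bsub>semidirect A\<^esub> y \<in> carrier (semidirect A)"
  by (cases x, cases y) (auto simp: sd_carrier sd_mult intro!: tmul_torus psi_torus)

lemma torus_nz: "c \<in> torus2 \<Longrightarrow> fst c \<noteq> 0 \<and> snd c \<noteq> 0"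
  by (cases c) (auto simp: torus2_def)

lemma tmul_cancel: "d \<in> torus2 \<Longrightarrow> tmul d x = tmul y d \<Longrightarrow> x = y"
  by (cases d, cases x, cases y) (auto simp: tmul_def torus2_def mult.commute)

lemma torus_eq_image: "torus2 = (\<lambda>p::real\<times>real. (cis (fst p), cis (snd p))) ` UNIV"
proof
  show "torus2 \<subseteq> (\<lambda>p. (cis (fst p), cis (snd p))) ` UNIV"
  proof
    fix c assume c: "c \<in> torus2"
    obtain z w where zw: "c = (z, w)" "cmod z = 1" "cmod w = 1" using c by (cases c) (auto simp: torus2_def)
    have e: "cis (Arg z) = z" "cis (Arg w) = w" using rcis_cmod_Arg[of z] rcis_cmod_Arg[of w] zw by (simp_all add: rcis_def)
    show "c \<in> (\<lambda>p. (cis (fst p), cis (snd p))) ` UNIV"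
    proof (rule image_eqI[where x="(Arg z, Arg w)"])
      show "c = (\<lambda>p. (cis (fst p), cis (snd p))) (Arg z, Arg w)" using zw(1) e by simp
    qed simp
  qed
qed (auto simp: torus2_def)

lemma connected_torus: "connected torus2"
  unfolding torus_eq_image by (intro connected_continuous_image connected_UNIV continuous_intros)

lemma int_additive: fixes h :: "int \<Rightarrow> int" assumes add: "\<And>m n. h (m + n) = h m + h n"
  shows "h m = m * h 1"
proof -
  have h0: "h 0 = 0" using add[of 0 0] by simp
  have nat: "h (int n) = int n * h 1" for n
  proof (induction n)
    case 0 then show ?case by (simp add: h0)
  next
    case (Suc n) then show ?case using add[of "int n" 1] by (simp add: algebra_simps)
  qed
  show ?thesis
  proof (cases "m \<ge> 0")
    case True then show ?thesis using nat[of "nat m"] by simp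
  next
    case False
    have "h (-m) + h m = 0" using add[of "-m" m] h0 by simp
    moreover have "h (-m) = (-m) * h 1" using nat[of "nat (-m)"] False by simp
    ultimately show ?thesis by (simp add: algebra_simps)
  qed
qed

lemma sd_struct:
  assumes iso: "\<phi> \<in> iso (semidirect A) (semidirect B)"
    and cont: "continuous_map semidirectTop semidirectTop \<phi>"
  shows "\<exists>C k. (\<forall>c\<in>torus2. \<phi> (c, 0) = (psi C c, 0)) \<and> (\<forall>c\<in>torus2. \<forall>m. snd (\<phi> (c, m)) = m * k)"
proof -
  have hom: "\<And>x y. x \<in> carrier (semidirect A) \<Longrightarrow> y \<in> carrier (semidirect A) \<Longrightarrow>
      \<phi> (x \<otimes>\<^bsub>semidirect A\<^esub> y) = \<phi> x \<otimes>\<^bsub>semidirect B\<^esub> \<phi> y"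
    using iso unfolding iso_def hom_def by auto
  have into: "\<And>x. x \<in> carrier (semidirect A) \<Longrightarrow> \<phi> x \<in> carrier (semidirect B)"
    using iso unfolding iso_def hom_def by auto
  define e :: "(complex \<times> complex) \<times> int" where "e = ((1,1),0)"
  have ein: "e \<in> carrier (semidirect A)" by (simp add: e_def sd_carrier)
  have ee: "e \<otimes>\<^bsub>semidirect A\<^esub> e = e" by (simp add: e_def sd_mult)
  have phie: "\<phi> e = e"
  proof -
    obtain c m where cm: "\<phi> e = (c, m)" by (cases "\<phi> e")
    have ct: "c \<in> torus2" using into[OF ein] cm by (simp add: sd_carrier)
    have "(c, m) = (c, m) \<otimes>\<^bsub>semidirect B\<^esub> (c, m)" using hom[OF ein ein] ee cm by simp
    then have m: "m = 0" and cc: "c = tmul c (psi (mpow B m) c)" by (auto simp: sd_mult)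
    then have "c = tmul c c" by (simp add: mpow_0 psi_id)
    then have "c = (1,1)" using torus_nz[OF ct] by (cases c) (auto simp: tmul_def)
    then show ?thesis using cm m by (simp add: e_def)
  qed
  \<comment> \<open>connectedness\<close>
  have snd0: "snd (\<phi> (c, 0)) = 0" if c: "c \<in> torus2" for c
  proof -
    have "connectedin semidirectTop (torus2 \<times> {0})"
      unfolding semidirectTop_def connectedin_Times
      by (simp add: connected_torus connectedin_discrete_topology)
    then have "connectedin (discrete_topology UNIV) ((snd \<circ> \<phi>) ` (torus2 \<times> {0}))"
      by (rule connectedin_continuous_map_image[rotated])
         (unfold semidirectTop_def, rule continuous_map_compose[OF cont[unfolded semidirectTop_def] continuous_map_snd])
    then obtain a where a: "(snd \<circ> \<phi>) ` (torus2 \<times> {0}) \<subseteq> {a}" by (auto simp: connectedin_discrete_topology)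
    have "(snd \<circ> \<phi>) ((1,1),0) \<in> (snd \<circ> \<phi>) ` (torus2 \<times> {0})" by (rule imageI) simp
    then have "(snd \<circ> \<phi>) ((1,1),0) \<in> {a}" by (rule subsetD[OF a])
    then have "snd (\<phi> ((1,1),0)) = a" by simp
    then have "a = 0" using phie by (simp add: e_def)
    then show ?thesis using a c by auto
  qed
  define \<theta> where "\<theta> c = fst (\<phi> (c, 0))" for c
  have phic: "\<phi> (c, 0) = (\<theta> c, 0)" if "c \<in> torus2" for c
    using snd0[OF that] unfolding \<theta>_def by (metis prod.collapse)
  have thin: "\<theta> c \<in> torus2" if "c \<in> torus2" for c
    using into[of "(c,0)"] that phic[OF that] by (simp add: sd_carrier)
  have thcont: "continuous_on torus2 \<theta>"
  proof -
    have "continuous_map (top_of_set torus2) semidirectTop (\<lambda>c. (c, 0::int))"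
      unfolding semidirectTop_def by (intro continuous_map_pairedI continuous_map_id continuous_map_const[THEN iffD2]) auto
    then have "continuous_map (top_of_set torus2) semidirectTop (\<phi> \<circ> (\<lambda>c. (c, 0::int)))"
      using cont by (rule continuous_map_compose)
    then have "continuous_map (top_of_set torus2) (top_of_set torus2) (fst \<circ> (\<phi> \<circ> (\<lambda>c. (c, 0::int))))"
      by (rule continuous_map_compose) (unfold semidirectTop_def, rule continuous_map_fst)
    then have "continuous_on torus2 (fst \<circ> (\<phi> \<circ> (\<lambda>c. (c, 0::int))))" by simp
    then show ?thesis unfolding \<theta>_def comp_def .
  qed
  have thhom: "\<theta> (tmul c d) = tmul (\<theta> c) (\<theta> d)" if c: "c \<in> torus2" and d: "d \<in> torus2" for c d
  proof -
    have "(c, 0) \<otimes>\<^bsub>semidirect A\<^esub> (d, 0) = (tmul c d, 0)" by (simp add: sd_mult mpow_0 psi_id)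
    then have "\<phi> (tmul c d, 0) = \<phi> (c, 0) \<otimes>\<^bsub>semidirect B\<^esub> \<phi> (d, 0)"
      using hom[of "(c,0)" "(d,0)"] c d by (simp add: sd_carrier)
    also have "\<dots> = (tmul (\<theta> c) (\<theta> d), 0)" using phic c d by (simp add: sd_mult mpow_0 psi_id)
    finally show ?thesis using phic[OF tmul_torus[OF c d]] by simp
  qed
  obtain C where C: "\<forall>c\<in>torus2. \<theta> c = psi C c"
    using endo_psi[OF thcont thin thhom] by blast
  define h where "h m = snd (\<phi> ((1,1), m))" for m
  have hadd: "h (m + n) = h m + h n" for m n
  proof -
    have "((1,1), m) \<otimes>\<^bsub>semidirect A\<^esub> ((1,1), n) = ((1,1), m + n)" by (simp add: sd_mult)
    then have "\<phi> ((1,1), m + n) = \<phi> ((1,1), m) \<otimes>\<^bsub>semidirect B\<^esub> \<phi> ((1,1), n)"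
      using hom[of "((1,1),m)" "((1,1),n)"] by (simp add: sd_carrier)
    then show ?thesis unfolding h_def by (simp add: sd_snd)
  qed
  have sndk: "snd (\<phi> (c, m)) = m * h 1" if c: "c \<in> torus2" for c m
  proof -
    have "(c, 0) \<otimes>\<^bsub>semidirect A\<^esub> ((1,1), m) = (c, m)" by (simp add: sd_mult)
    then have "\<phi> (c, m) = \<phi> (c, 0) \<otimes>\<^bsub>semidirect B\<^esub> \<phi> ((1,1), m)"
      using hom[of "(c,0)" "((1,1),m)"] c by (simp add: sd_carrier)
    then have "snd (\<phi> (c, m)) = snd (\<phi> (c, 0)) + h m" unfolding h_def by (simp add: sd_snd)
    then show ?thesis using snd0[OF c] int_additive[of h m, OF hadd] by simp
  qed
  show ?thesis using phic C sndk by metis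
qed

lemma sd_forward:
  assumes A: "invertible A" and B: "invertible B"
    and tgi: "top_group_iso (semidirect A) semidirectTop (semidirect B) semidirectTop"
  shows "\<exists>C\<in>GL2Z. B = matrix_inv C ** A ** C \<or> matrix_inv B = matrix_inv C ** A ** C"
proof -
  obtain \<phi> where phi: "\<phi> \<in> iso (semidirect A) (semidirect B)" "homeomorphic_map semidirectTop semidirectTop \<phi>"
    using tgi by (auto simp: top_group_iso_def)
  then obtain \<psi> where maps: "homeomorphic_maps semidirectTop semidirectTop \<phi> \<psi>" by (auto simp: homeomorphic_map_maps)
  have psi: "\<psi> \<in> iso (semidirect B) (semidirect A)"
    by (rule iso_inv_maps[OF phi(1) maps]) (auto simp: sd_top sd_carrier intro: sd_closed[unfolded sd_carrier])
  have cphi: "continuous_map semidirectTop semidirectTop \<phi>" and cpsi: "continuous_map semidirectTop semidirectTop \<psi>"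
    and psiphi: "\<And>x. x \<in> torus2 \<times> UNIV \<Longrightarrow> \<psi> (\<phi> x) = x"
    and phipsi: "\<And>x. x \<in> torus2 \<times> UNIV \<Longrightarrow> \<phi> (\<psi> x) = x"
    using maps unfolding homeomorphic_maps_def sd_top by auto
  have hom: "\<And>x y. x \<in> carrier (semidirect A) \<Longrightarrow> y \<in> carrier (semidirect A) \<Longrightarrow>
      \<phi> (x \<otimes>\<^bsub>semidirect A\<^esub> y) = \<phi> x \<otimes>\<^bsub>semidirect B\<^esub> \<phi> y"
    using phi(1) unfolding iso_def hom_def by auto
  have into: "\<And>x. x \<in> carrier (semidirect A) \<Longrightarrow> \<phi> x \<in> carrier (semidirect B)"
    using phi(1) unfolding iso_def hom_def by auto
  have surj: "\<phi> ` carrier (semidirect A) = carrier (semidirect B)"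
    using phi(1) unfolding iso_def bij_betw_def by auto
  obtain C k where C: "\<forall>c\<in>torus2. \<phi> (c, 0) = (psi C c, 0)" and k: "\<forall>c\<in>torus2. \<forall>m. snd (\<phi> (c, m)) = m * k"
    using sd_struct[OF phi(1) cphi] by blast
  obtain D where D: "\<forall>c\<in>torus2. \<psi> (c, 0) = (psi D c, 0)"
    using sd_struct[OF psi cpsi] by blast
  have DC: "D ** C = mat 1"
  proof (rule psi_inj, intro ballI)
    fix c assume c: "c \<in> torus2"
    have "(c, 0) = \<psi> (\<phi> (c, 0))" using psiphi c by simp
    also have "\<dots> = (psi D (psi C c), 0)" using C D c psi_torus by simp
    finally show "psi (D ** C) c = psi (mat 1) c" using psi_comp[OF c] by (simp add: psi_id)
  qed
  have CD: "C ** D = mat 1"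
  proof (rule psi_inj, intro ballI)
    fix c assume c: "c \<in> torus2"
    have "(c, 0) = \<phi> (\<psi> (c, 0))" using phipsi c by simp
    also have "\<dots> = (psi C (psi D c), 0)" using C D c psi_torus by simp
    finally show "psi (C ** D) c = psi (mat 1) c" using psi_comp[OF c] by (simp add: psi_id)
  qed
  have Dinv: "invertible D" using DC CD unfolding invertible_def by blast
  have iD: "matrix_inv D = C" by (rule minv_unique[OF DC CD])
  \<comment> \<open>k is a unit\<close>
  have "((1,1), 1) \<in> carrier (semidirect B)" by (simp add: sd_carrier)
  then obtain x where x: "x \<in> carrier (semidirect A)" "\<phi> x = ((1,1), 1)" using surj by (metis imageE)
  obtain c m where xcm: "x = (c, m)" by (cases x)
  have ct: "c \<in> torus2" using x(1) xcm by (simp add: sd_carrier)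
  have "snd (\<phi> (c, m)) = m * k" using k ct by blast
  moreover have "\<phi> (c, m) = ((1,1), 1)" using x(2) xcm by simp
  ultimately have "m * k = 1" by simp
  then have kk: "k = 1 \<or> k = -1" using zmult_eq_1_iff by auto
  \<comment> \<open>conjugation\<close>
  define g :: "(complex \<times> complex) \<times> int" where "g = ((1,1), 1)"
  have gin: "g \<in> carrier (semidirect A)" by (simp add: g_def sd_carrier)
  obtain d k' where dk: "\<phi> g = (d, k')" by (cases "\<phi> g")
  have dt: "d \<in> torus2" using into[OF gin] dk by (simp add: sd_carrier)
  have k': "k' = k" using k[rule_format, of "(1,1)" 1] dk by (simp add: g_def)
  have MB: "mpow B k ** C = C ** A"
  proof (rule psi_inj, intro ballI)
    fix c assume c: "c \<in> torus2"
    have pc: "psi A c \<in> torus2" by (rule psi_torus[OF c])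
    have "g \<otimes>\<^bsub>semidirect A\<^esub> (c, 0) = (psi A c, 1)" by (simp add: g_def sd_mult mpow_1)
    moreover have "(psi A c, 0) \<otimes>\<^bsub>semidirect A\<^esub> g = (psi A c, 1)" by (simp add: g_def sd_mult)
    ultimately have "\<phi> (g \<otimes>\<^bsub>semidirect A\<^esub> (c, 0)) = \<phi> ((psi A c, 0) \<otimes>\<^bsub>semidirect A\<^esub> g)" by simp
    then have "\<phi> g \<otimes>\<^bsub>semidirect B\<^esub> \<phi> (c, 0) = \<phi> (psi A c, 0) \<otimes>\<^bsub>semidirect B\<^esub> \<phi> g"
      using hom gin c pc by (simp add: sd_carrier)
    then have "(d, k) \<otimes>\<^bsub>semidirect B\<^esub> (psi C c, 0) = (psi C (psi A c), 0) \<otimes>\<^bsub>semidirect B\<^esub> (d, k)"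
      using dk k' C c pc by simp
    then have "tmul d (psi (mpow B k) (psi C c)) = tmul (psi C (psi A c)) d"
      by (simp add: sd_mult mpow_0 psi_id)
    then have "psi (mpow B k) (psi C c) = psi C (psi A c)" by (rule tmul_cancel[OF dt])
    then show "psi (mpow B k ** C) c = psi (C ** A) c" using psi_comp[OF c] by simp
  qed
  have "mpow B k = mpow B k ** (C ** D)" using CD by simp
  also have "\<dots> = C ** A ** D" using MB by (simp add: matrix_mul_assoc)
  finally have "mpow B k = matrix_inv D ** A ** D" using iD by simp
  then have "B = matrix_inv D ** A ** D \<or> matrix_inv B = matrix_inv D ** A ** D"
    using kk by (auto simp: mpow_1 mpow_m1)
  moreover have "D \<in> GL2Z" using Dinv by (simp add: GL2Z_def)
  ultimately show ?thesis by blast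
qed



lemma psi_cont: "continuous_on torus2 (psi X)"
proof -
  have e: "psi X = (\<lambda>c. (fst c powi (X$1$1) * snd c powi (X$1$2), fst c powi (X$2$1) * snd c powi (X$2$2)))"
    by (rule ext) (simp add: psi_def split: prod.splits)
  show ?thesis unfolding e
    by (intro continuous_intros) (auto dest: torus_nz)
qed

lemma psi_cmap: "continuous_map semidirectTop (top_of_set torus2) (\<lambda>x. psi X (fst x))"
proof -
  have "continuous_map (top_of_set torus2) (top_of_set torus2) (psi X)"
    using psi_cont psi_torus by auto
  then have "continuous_map semidirectTop (top_of_set torus2) (psi X \<circ> fst)"
    unfolding semidirectTop_def by (rule continuous_map_compose[OF continuous_map_fst])
  then show ?thesis by (simp add: comp_def)
qed

lemma smul_cmap: "continuous_map semidirectTop (discrete_topology UNIV) (\<lambda>x. s * snd x :: int)"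
proof -
  have "continuous_map semidirectTop (discrete_topology UNIV) ((\<lambda>m. s * m) \<circ> snd)"
    unfolding semidirectTop_def by (rule continuous_map_compose[OF continuous_map_snd]) simp
  then show ?thesis by (simp add: comp_def)
qed

lemma sd_map_cont: "continuous_map semidirectTop semidirectTop (\<lambda>x. (psi X (fst x), s * snd x))"
  using psi_cmap[of X] smul_cmap[of s] unfolding semidirectTop_def
  by (intro continuous_map_pairedI) (simp_all add: semidirectTop_def)

lemma sd_backward:
  assumes A: "invertible A" and B: "invertible B" and C: "invertible C"
    and cond: "B = matrix_inv C ** A ** C \<or> matrix_inv B = matrix_inv C ** A ** C"
  shows "top_group_iso (semidirect A) semidirectTop (semidirect B) semidirectTop"
proof -
  obtain s :: int where s: "s = 1 \<or> s = -1" and sm: "\<And>m. mpow B (s * m) = matrix_inv C ** mpow A m ** C"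
  proof (cases "B = matrix_inv C ** A ** C")
    case True
    show ?thesis by (rule that[of 1]) (simp_all add: True mpow_conj[OF C A])
  next
    case False
    then have iB: "matrix_inv B = matrix_inv C ** A ** C" using cond by simp
    show ?thesis
    proof (rule that[of "-1"])
      fix m
      have "mpow B (-1 * m) = mpow (matrix_inv B) m" using mpow_inv[OF B, of m] by simp
      also have "\<dots> = matrix_inv C ** mpow A m ** C" unfolding iB by (rule mpow_conj[OF C A])
      finally show "mpow B (-1 * m) = matrix_inv C ** mpow A m ** C" .
    qed simp
  qed
  have ss: "s * s = 1" using s by auto
  define D where "D = matrix_inv C"
  have CD: "C ** D = mat 1" and DC: "D ** C = mat 1" using minv[OF C] by (auto simp: D_def)
  define \<sigma> where "\<sigma> x = (psi D (fst x), s * snd x)" for x :: "(complex \<times> complex) \<times> int"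
  define \<tau> where "\<tau> x = (psi C (fst x), s * snd x)" for x :: "(complex \<times> complex) \<times> int"
  have tauin: "\<And>x. x \<in> torus2 \<times> UNIV \<Longrightarrow> \<tau> x \<in> torus2 \<times> UNIV"
    and sigin: "\<And>x. x \<in> torus2 \<times> UNIV \<Longrightarrow> \<sigma> x \<in> torus2 \<times> UNIV"
    by (auto simp: \<tau>_def \<sigma>_def psi_torus)
  have ts: "\<And>x. x \<in> torus2 \<times> UNIV \<Longrightarrow> \<tau> (\<sigma> x) = x"
  proof -
    fix x :: "(complex \<times> complex) \<times> int" assume x: "x \<in> torus2 \<times> UNIV"
    have "psi C (psi D (fst x)) = fst x" using x psi_comp[of "fst x" C D] CD by (auto simp: psi_id)
    then show "\<tau> (\<sigma> x) = x" using ss by (simp add: \<tau>_def \<sigma>_def mult.assoc[symmetric])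
  qed
  have st: "\<And>x. x \<in> torus2 \<times> UNIV \<Longrightarrow> \<sigma> (\<tau> x) = x"
  proof -
    fix x :: "(complex \<times> complex) \<times> int" assume x: "x \<in> torus2 \<times> UNIV"
    have "psi D (psi C (fst x)) = fst x" using x psi_comp[of "fst x" D C] DC by (auto simp: psi_id)
    then show "\<sigma> (\<tau> x) = x" using ss by (simp add: \<tau>_def \<sigma>_def mult.assoc[symmetric])
  qed
  have hom: "\<sigma> (x \<otimes>\<^bsub>semidirect A\<^esub> y) = \<sigma> x \<otimes>\<^bsub>semidirect B\<^esub> \<sigma> y"
    if x: "x \<in> torus2 \<times> UNIV" and y: "y \<in> torus2 \<times> UNIV" for x y
  proof -
    obtain c m where xcm: "x = (c, m)" by (cases x)
    obtain d n where ydn: "y = (d, n)" by (cases y)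
    have ct: "c \<in> torus2" and dt: "d \<in> torus2" using x y xcm ydn by auto
    have M: "mpow B (s * m) ** D = D ** mpow A m"
    proof -
      have "mpow B (s * m) ** D = D ** mpow A m ** (C ** D)" by (simp add: sm D_def matrix_mul_assoc)
      then show ?thesis using CD by simp
    qed
    have "\<sigma> (x \<otimes>\<^bsub>semidirect A\<^esub> y) = (tmul (psi D c) (psi D (psi (mpow A m) d)), s * (m + n))"
      by (simp add: xcm ydn sd_mult \<sigma>_def psi_tmul)
    also have "\<dots> = (tmul (psi D c) (psi (D ** mpow A m) d), s * m + s * n)"
      by (simp add: psi_comp[OF dt] distrib_left)
    also have "\<dots> = (tmul (psi D c) (psi (mpow B (s * m) ** D) d), s * m + s * n)" by (simp add: M)
    also have "\<dots> = (tmul (psi D c) (psi (mpow B (s * m)) (psi D d)), s * m + s * n)"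
      by (simp add: psi_comp[OF dt])
    also have "\<dots> = \<sigma> x \<otimes>\<^bsub>semidirect B\<^esub> \<sigma> y" by (simp add: xcm ydn sd_mult \<sigma>_def)
    finally show ?thesis .
  qed
  have "\<sigma> \<in> iso (semidirect A) (semidirect B)"
    unfolding iso_def hom_def
  proof (intro CollectI conjI ballI)
    show "\<sigma> \<in> carrier (semidirect A) \<rightarrow> carrier (semidirect B)" using sigin by (auto simp: sd_carrier)
    show "\<sigma> (x \<otimes>\<^bsub>semidirect A\<^esub> y) = \<sigma> x \<otimes>\<^bsub>semidirect B\<^esub> \<sigma> y"
      if "x \<in> carrier (semidirect A)" "y \<in> carrier (semidirect A)" for x y
      using hom that by (simp add: sd_carrier)
    show "bij_betw \<sigma> (carrier (semidirect A)) (carrier (semidirect B))"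
      unfolding sd_carrier by (rule bij_betw_byWitness[where f'=\<tau>]) (use ts in blast, use st in blast, use sigin in blast, use tauin in blast)
  qed
  moreover have "homeomorphic_map semidirectTop semidirectTop \<sigma>"
  proof -
    have "homeomorphic_maps semidirectTop semidirectTop \<sigma> \<tau>"
      unfolding homeomorphic_maps_def sd_top
      using sd_map_cont[of D s] sd_map_cont[of C s] ts st
      by (auto simp: \<sigma>_def[abs_def] \<tau>_def[abs_def])
    then show ?thesis using homeomorphic_maps_map by blast
  qed
  ultimately show ?thesis unfolding top_group_iso_def by blast
qed

theorem mainTheorem14:
  fixes \<alpha> \<beta> :: real and A B :: "int^2^2"
  assumes "\<alpha> > 0" "quadratic_irrational \<alpha>"
    and "\<beta> > 0" "quadratic_irrational \<beta>"
    and "A \<in> GL2Z" "B \<in> GL2Z" "A \<noteq> mat 1" "B \<noteq> mat 1"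
    and "top_group_iso (AutG \<alpha>) (AutTop \<alpha>) (semidirect A) semidirectTop"
    and "top_group_iso (AutG \<beta>) (AutTop \<beta>) (semidirect B) semidirectTop"
  shows "top_group_iso (AutG \<alpha>) (AutTop \<alpha>) (AutG \<beta>) (AutTop \<beta>) \<longleftrightarrow>
    (\<exists>C\<in>GL2Z. B = matrix_inv C ** A ** C \<or> matrix_inv B = matrix_inv C ** A ** C)"
proof -
  have iA: "invertible A" and iB: "invertible B" using assms(5,6) by (auto simp: GL2Z_def)
  have symA: "top_group_iso (semidirect A) semidirectTop (AutG \<alpha>) (AutTop \<alpha>)"
    by (rule tgi_sym[OF assms(9) topspace_AutTop]) (auto simp: sd_top sd_carrier intro: AutG_closed)
  have symB: "top_group_iso (semidirect B) semidirectTop (AutG \<beta>) (AutTop \<beta>)"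
    by (rule tgi_sym[OF assms(10) topspace_AutTop]) (auto simp: sd_top sd_carrier intro: AutG_closed)
  show ?thesis
  proof
    assume h: "top_group_iso (AutG \<alpha>) (AutTop \<alpha>) (AutG \<beta>) (AutTop \<beta>)"
    have "top_group_iso (semidirect A) semidirectTop (semidirect B) semidirectTop"
      by (rule tgi_trans[OF tgi_trans[OF symA h] assms(10)])
    then show "\<exists>C\<in>GL2Z. B = matrix_inv C ** A ** C \<or> matrix_inv B = matrix_inv C ** A ** C"
      by (rule sd_forward[OF iA iB])
  next
    assume "\<exists>C\<in>GL2Z. B = matrix_inv C ** A ** C \<or> matrix_inv B = matrix_inv C ** A ** C"
    then obtain C where C: "invertible C" and cond: "B = matrix_inv C ** A ** C \<or> matrix_inv B = matrix_inv C ** A ** C"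
      by (auto simp: GL2Z_def)
    have "top_group_iso (semidirect A) semidirectTop (semidirect B) semidirectTop"
      by (rule sd_backward[OF iA iB C cond])
    then show "top_group_iso (AutG \<alpha>) (AutTop \<alpha>) (AutG \<beta>) (AutTop \<beta>)"
      by (rule tgi_trans[OF tgi_trans[OF assms(9)] symB])
  qed
qed

end
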